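(* Let $R$ be a partially ordered commutative ring. Then $\mathrm{O}_{q<\infty}\cap\mathrm{O}_{s<\infty}=\mathrm{O}_{qs<\infty}$ for all $q,s\in\mathrm{Loc}(R)$, and $\mathrm{O}_{1<\infty}=\mathcal{K}(R)$; hence $\mathcal{D}_{\mathrm{loc}}(R)=\{\mathrm{O}_{s<\infty}:s\in\mathrm{Loc}(R)\}$ is an admissible set of domains on $\mathcal{K}(R)$.
   Context: Rings are commutative with unit; ring morphisms are unital. A partially ordered commutative ring is a commutative ring $R$ with partial order $\le$, $r\le s\Rightarrow r+t\le s+t$, positive cone $R^+$ closed under multiplication and containing all squares. $\mathbb{N}_0=\{0,1,2,\dots\}$. $\mathrm{Loc}(R)$ is the set of $s\in1+R^+$ such that $rs\in R^+$ implies $r\in R^+$ for all $r\in R$ (it is closed under multiplication). $R_{\mathrm{loc}}$: fractions $r/s$ ($r\in R$, $s\in\mathrm{Loc}(R)$), $r/s=r'/s'$ iff $rs'=r's$, ordered by $p/q\le r/s$ iff $ps\le rq$. $R^{\mathrm{bd}}_{\mathrm{loc}}=\{a:\exists n\in\mathbb{N}_0,\ -n\le a\le n\}$. $\mathcal{K}(R)$: ring morphisms $\varphi\colon R^{\mathrm{bd}}_{\mathrm{loc}}\to\mathbb{R}$ with $\varphi(a)\ge0$ for $a\ge0$, with the weak-$*$ topology (generated by $\{\varphi:\varphi(a)\in V\}$, $V\subseteq\mathbb{R}$ open). For $s\in\mathrm{Loc}(R)$, $\mathrm{O}_{s<\infty}=\{\varphi\in\mathcal{K}(R):\varphi(1/s)>0\}$.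 An admissible set of domains on a topological space $Y$ is a set of open subsets containing $Y$ and closed under pairwise intersections. *)

theory Defs
  imports "HOL-Analysis.Analysis"
begin

definition pocr :: "('a::comm_ring_1 \<Rightarrow> 'a \<Rightarrow> bool) \<Rightarrow> bool" where
  "pocr le \<longleftrightarrow>
     (\<forall>r. le r r) \<and>
     (\<forall>r s. le r s \<and> le s r \<longrightarrow> r = s) \<and>
     (\<forall>r s t. le r s \<and> le s t \<longrightarrow> le r t) \<and>
     (\<forall>r s t. le r s \<longrightarrow> le (r + t) (s + t)) \<and>
     (\<forall>r s. le 0 r \<and> le 0 s \<longrightarrow> le 0 (r * s)) \<and>
     (\<forall>r. le 0 (r * r))"

definition pos_cone :: "('a::comm_ring_1 \<Rightarrow> 'a \<Rightarrow> bool) \<Rightarrow> 'a set" where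
  "pos_cone le = {r. le 0 r}"

definition Loc :: "('a::comm_ring_1 \<Rightarrow> 'a \<Rightarrow> bool) \<Rightarrow> 'a set" where
  "Loc le = {s. s - 1 \<in> pos_cone le \<and> (\<forall>r. r * s \<in> pos_cone le \<longrightarrow> r \<in> pos_cone le)}"

text \<open>Elements of R_loc are represented by pairs (r, s) standing for the fraction r/s,
  with s in Loc(R); two pairs represent the same fraction iff r s' = r' s.\<close>
definition frac :: "('a::comm_ring_1 \<Rightarrow> 'a \<Rightarrow> bool) \<Rightarrow> ('a \<times> 'a) set" where
  "frac le = {(r, s). s \<in> Loc le}"

definition frac_eq :: "'a::comm_ring_1 \<times> 'a \<Rightarrow> 'a \<times> 'a \<Rightarrow> bool" where
  "frac_eq p q \<longleftrightarrow> fst p * snd q = fst q * snd p"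

definition frac_le :: "('a::comm_ring_1 \<Rightarrow> 'a \<Rightarrow> bool) \<Rightarrow> 'a \<times> 'a \<Rightarrow> 'a \<times> 'a \<Rightarrow> bool" where
  "frac_le le p q \<longleftrightarrow> le (fst p * snd q) (fst q * snd p)"

definition frac_add :: "'a::comm_ring_1 \<times> 'a \<Rightarrow> 'a \<times> 'a \<Rightarrow> 'a \<times> 'a" where
  "frac_add p q = (fst p * snd q + fst q * snd p, snd p * snd q)"

definition frac_mul :: "'a::comm_ring_1 \<times> 'a \<Rightarrow> 'a \<times> 'a \<Rightarrow> 'a \<times> 'a" where
  "frac_mul p q = (fst p * fst q, snd p * snd q)"

text \<open>Representatives of the bounded part R_loc^bd: -n \<le> a \<le> n for some n in N_0
  (the integer n is the fraction n/1).\<close>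
definition bd_frac :: "('a::comm_ring_1 \<Rightarrow> 'a \<Rightarrow> bool) \<Rightarrow> ('a \<times> 'a) set" where
  "bd_frac le = {p \<in> frac le. \<exists>n::nat.
       frac_le le (- of_nat n, 1) p \<and> frac_le le p (of_nat n, 1)}"

text \<open>K(R): positive unital ring morphisms R_loc^bd \<rightarrow> \<real>, represented as functions on
  representing pairs that respect equality of fractions; they are taken to be 0 outside the
  representatives of R_loc^bd so that each morphism corresponds to exactly one function.\<close>
definition Kspec :: "('a::comm_ring_1 \<Rightarrow> 'a \<Rightarrow> bool) \<Rightarrow> ('a \<times> 'a \<Rightarrow> real) set" where
  "Kspec le = {\<phi>.
     (\<forall>p. p \<notin> bd_frac le \<longrightarrow> \<phi> p = 0) \<and>
     (\<forall>p\<in>bd_frac le. \<forall>q\<in>bd_frac le. frac_eq p q \<longrightarrow> \<phi> p = \<phi> q) \<and>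
     \<phi> (1, 1) = 1 \<and>
     (\<forall>p\<in>bd_frac le. \<forall>q\<in>bd_frac le. \<phi> (frac_add p q) = \<phi> p + \<phi> q) \<and>
     (\<forall>p\<in>bd_frac le. \<forall>q\<in>bd_frac le. \<phi> (frac_mul p q) = \<phi> p * \<phi> q) \<and>
     (\<forall>p\<in>bd_frac le. frac_le le (0, 1) p \<longrightarrow> \<phi> p \<ge> 0)}"

definition Ktop :: "('a::comm_ring_1 \<Rightarrow> 'a \<Rightarrow> bool) \<Rightarrow> ('a \<times> 'a \<Rightarrow> real) topology" where
  "Ktop le = topology_generated_by
     {{\<phi> \<in> Kspec le. \<phi> p \<in> V} | p V. p \<in> bd_frac le \<and> open V}"

definition Ofin :: "('a::comm_ring_1 \<Rightarrow> 'a \<Rightarrow> bool) \<Rightarrow> 'a \<Rightarrow> ('a \<times> 'a \<Rightarrow> real) set" where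
  "Ofin le s = {\<phi> \<in> Kspec le. \<phi> (1, s) > 0}"

definition Dloc :: "('a::comm_ring_1 \<Rightarrow> 'a \<Rightarrow> bool) \<Rightarrow> ('a \<times> 'a \<Rightarrow> real) set set" where
  "Dloc le = Ofin le ` Loc le"

definition admissible_domains :: "'b topology \<Rightarrow> 'b set set \<Rightarrow> bool" where
  "admissible_domains Y D \<longleftrightarrow>
     (\<forall>U\<in>D. openin Y U) \<and> topspace Y \<in> D \<and> (\<forall>U\<in>D. \<forall>V\<in>D. U \<inter> V \<in> D)"

end

theory Submission
  imports Defs
begin

lemma pocr_facts:
  assumes "pocr le"
  shows "\<And>r. le r r" "\<And>r s t. le r s \<Longrightarrow> le s t \<Longrightarrow> le r t"
    "\<And>r s t. le r s \<Longrightarrow> le (r + t) (s + t)"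
    "\<And>r s. le 0 r \<Longrightarrow> le 0 s \<Longrightarrow> le 0 (r * s)" "\<And>r. le 0 (r * r)"
  using assms unfolding pocr_def by blast+

lemma pos_add:
  assumes "pocr le" "le 0 a" "le 0 b" shows "le 0 (a + b)"
proof -
  have "le (0 + b) (a + b)" using pocr_facts(3)[OF assms(1) assms(2)] .
  then show ?thesis using pocr_facts(2)[OF assms(1) assms(3)] by simp
qed

lemma one_pos: assumes "pocr le" shows "le 0 1"
  using pocr_facts(5)[OF assms, of 1] by simp

lemma Loc_one: assumes "pocr le" shows "1 \<in> Loc le"
  using pocr_facts(1)[OF assms, of 0] unfolding Loc_def pos_cone_def by simp

lemma Loc_mult:
  assumes "pocr le" "q \<in> Loc le" "s \<in> Loc le" shows "q * s \<in> Loc le"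
proof -
  have q1: "le 0 (q - 1)" and s1: "le 0 (s - 1)" using assms(2,3) unfolding Loc_def pos_cone_def by auto
  have e1: "le 0 ((q - 1) * (s - 1) + ((q - 1) + (s - 1)))"
    using pos_add[OF assms(1) pocr_facts(4)[OF assms(1) q1 s1] pos_add[OF assms(1) q1 s1]] .
  have e2: "(q - 1) * (s - 1) + ((q - 1) + (s - 1)) = q * s - 1" by (simp add: algebra_simps)
  have "le 0 (q * s - 1)" using e1 unfolding e2 .
  then have a: "q * s - 1 \<in> pos_cone le" unfolding pos_cone_def by simp
  have "r \<in> pos_cone le" if "r * (q * s) \<in> pos_cone le" for r
  proof -
    have "(r * q) * s \<in> pos_cone le" using that by (simp add: mult.assoc)
    then have "r * q \<in> pos_cone le" using assms(3) unfolding Loc_def by blast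
    then show ?thesis using assms(2) unfolding Loc_def by blast
  qed
  then show ?thesis using a unfolding Loc_def by blast
qed

lemma inv_bd:
  assumes "pocr le" "q \<in> Loc le" shows "(1, q) \<in> bd_frac le"
proof -
  have q1: "le 0 (q - 1)" using assms(2) unfolding Loc_def pos_cone_def by auto
  have "le (0 + 1) (q - 1 + 1)" using pocr_facts(3)[OF assms(1) q1] .
  then have lq: "le 1 q" by simp
  have "le 0 q" using pocr_facts(2)[OF assms(1) one_pos[OF assms(1)] lq] .
  have "le (- q) 0"
    using pocr_facts(3)[OF assms(1) \<open>le 0 q\<close>, of "-q"] by simp
  then have "le (- q) 1" using pocr_facts(2)[OF assms(1) _ one_pos[OF assms(1)]] by blast
  have "frac_le le (- of_nat 1, 1) (1, q) \<and> frac_le le (1, q) (of_nat 1, 1)"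
    unfolding frac_le_def using \<open>le (- q) 1\<close> lq by simp
  then have "\<exists>n::nat. frac_le le (- of_nat n, 1) (1, q) \<and> frac_le le (1, q) (of_nat n, 1)" by blast
  then show ?thesis unfolding bd_frac_def frac_def using assms(2) by simp
qed

lemma Kspec_mul:
  assumes "\<phi> \<in> Kspec le" "p \<in> bd_frac le" "q \<in> bd_frac le"
  shows "\<phi> (frac_mul p q) = \<phi> p * \<phi> q"
proof -
  have "\<forall>p\<in>bd_frac le. \<forall>q\<in>bd_frac le. \<phi> (frac_mul p q) = \<phi> p * \<phi> q"
    using assms(1) unfolding Kspec_def mem_Collect_eq by (elim conjE)
  then show ?thesis using assms(2,3) by simp
qed

lemma Kspec_pos:
  assumes "\<phi> \<in> Kspec le" "p \<in> bd_frac le" "frac_le le (0, 1) p"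
  shows "\<phi> p \<ge> 0"
proof -
  have "\<forall>p\<in>bd_frac le. frac_le le (0, 1) p \<longrightarrow> \<phi> p \<ge> 0"
    using assms(1) unfolding Kspec_def mem_Collect_eq by (elim conjE)
  then show ?thesis using assms(2,3) by simp
qed

lemma Kspec_one:
  assumes "\<phi> \<in> Kspec le" shows "\<phi> (1, 1) = 1"
proof -
  show ?thesis using assms(1) unfolding Kspec_def mem_Collect_eq by (elim conjE)
qed

lemma phi_nonneg:
  assumes "pocr le" "q \<in> Loc le" "\<phi> \<in> Kspec le" shows "\<phi> (1, q) \<ge> 0"
proof -
  have "frac_le le (0, 1) (1, q)" unfolding frac_le_def using one_pos[OF assms(1)] by simp
  then show ?thesis using Kspec_pos[OF assms(3) inv_bd[OF assms(1,2)]] by simp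
qed

lemma phi_mult:
  assumes "pocr le" "q \<in> Loc le" "s \<in> Loc le" "\<phi> \<in> Kspec le"
  shows "\<phi> (1, q * s) = \<phi> (1, q) * \<phi> (1, s)"
proof -
  have "\<phi> (frac_mul (1, q) (1, s)) = \<phi> (1, q) * \<phi> (1, s)"
    using Kspec_mul[OF assms(4) inv_bd[OF assms(1,2)] inv_bd[OF assms(1,3)]] .
  then show ?thesis unfolding frac_mul_def by simp
qed

lemma Ofin_inter:
  assumes "pocr le" "q \<in> Loc le" "s \<in> Loc le"
  shows "Ofin le q \<inter> Ofin le s = Ofin le (q * s)"
proof -
  have "(\<phi> (1, q) > 0 \<and> \<phi> (1, s) > 0) = (\<phi> (1, q * s) > 0)" if "\<phi> \<in> Kspec le" for \<phi>
  proof -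
    have "\<phi> (1, q) \<ge> 0" "\<phi> (1, s) \<ge> 0"
      using phi_nonneg[OF assms(1,2) that] phi_nonneg[OF assms(1,3) that] by auto
    then show ?thesis unfolding phi_mult[OF assms that] by (auto simp: zero_less_mult_iff)
  qed
  then show ?thesis unfolding Ofin_def by blast
qed

lemma Ofin_one: assumes "pocr le" shows "Ofin le 1 = Kspec le"
  unfolding Ofin_def using Kspec_one by fastforce

theorem proposition23:
  fixes le :: "'a::comm_ring_1 \<Rightarrow> 'a \<Rightarrow> bool"
  assumes "pocr le"
  shows "(\<forall>q\<in>Loc le. \<forall>s\<in>Loc le. Ofin le q \<inter> Ofin le s = Ofin le (q * s))
         \<and> Ofin le 1 = Kspec le
         \<and> admissible_domains (Ktop le) (Dloc le)"
proof -
  define G where "G = {{\<phi> \<in> Kspec le. \<phi> p \<in> V} | p V. p \<in> bd_frac le \<and> open V}"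
  have KG: "Ktop le = topology_generated_by G" unfolding Ktop_def G_def ..
  have inG: "{\<phi> \<in> Kspec le. \<phi> p \<in> V} \<in> G" if "p \<in> bd_frac le" "open V" for p V
    unfolding G_def using that by blast
  have op: "openin (Ktop le) (Ofin le s)" if "s \<in> Loc le" for s
  proof -
    have e: "Ofin le s = {\<phi> \<in> Kspec le. \<phi> (1, s) \<in> {0<..}}" unfolding Ofin_def by simp
    have "Ofin le s \<in> G" unfolding e by (rule inG[OF inv_bd[OF assms that] open_greaterThan])
    then show ?thesis unfolding KG by (rule topology_generated_by_Basis)
  qed
  have "{\<phi> \<in> Kspec le. \<phi> (1, 1) \<in> UNIV} \<in> G"
    by (rule inG[OF inv_bd[OF assms Loc_one[OF assms]] open_UNIV])
  then have KinG: "Kspec le \<in> G" by simp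
  have Gsub: "U \<subseteq> Kspec le" if "U \<in> G" for U
    using that unfolding G_def by auto
  have "\<Union>G = Kspec le"
    using KinG Gsub by (intro equalityI Union_least Union_upper) auto
  then have ts: "topspace (Ktop le) = Kspec le" unfolding KG topology_generated_by_topspace .
  have adm: "admissible_domains (Ktop le) (Dloc le)"
    unfolding admissible_domains_def Dloc_def
  proof (intro conjI ballI)
    have "Ofin le 1 \<in> Ofin le ` Loc le" using Loc_one[OF assms] by (rule imageI)
    then show "topspace (Ktop le) \<in> Ofin le ` Loc le"
      unfolding ts Ofin_one[OF assms] .
  next
    fix U assume "U \<in> Ofin le ` Loc le"
    then obtain s where "s \<in> Loc le" "U = Ofin le s" by blast
    then show "openin (Ktop le) U" using op by simp
  next
    fix U V assume "U \<in> Ofin le ` Loc le" "V \<in> Ofin le ` Loc le"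
    then obtain q s where qs: "q \<in> Loc le" "U = Ofin le q" "s \<in> Loc le" "V = Ofin le s" by blast
    have "Ofin le (q * s) \<in> Ofin le ` Loc le" using Loc_mult[OF assms qs(1,3)] by (rule imageI)
    then show "U \<inter> V \<in> Ofin le ` Loc le" unfolding qs(2,4) Ofin_inter[OF assms qs(1,3)] .
  qed
  have "\<forall>q\<in>Loc le. \<forall>s\<in>Loc le. Ofin le q \<inter> Ofin le s = Ofin le (q * s)"
    using Ofin_inter[OF assms] by blast
  then show ?thesis using Ofin_one[OF assms] adm by blast
qed

end
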